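(* Assume the setting in the context, with a decomposition of $\mathcal X$ over $A$, a cost function $g\in\mathcal G_s$ and a discount factor $\alpha\in(0,1)$. Then the family $\{(A,B|_{\mathcal E_i},g,\alpha)\}_{i\in\mathcal I}$ is a decomposition (in the sense of Definition 1) of $(A,B,g,\alpha)$ if and only if for every $x\in\mathcal X$ there exists an optimal policy at $x$ for $(A,B,g,\alpha)$ all of whose components lie in $\bigoplus_{i\in\mathcal I}\mathcal E_i$, i.e. $$\operatorname*{argmin}_{\pi\in\mathcal U^{\mathbb Z_+}}J(x,\pi)\;\cap\;\Big[\bigoplus_{i\in\mathcal I}\mathcal E_i\Big]^{\mathbb Z_+}\neq\emptyset\qquad\forall x\in\mathcal X.$$
   Context: Let $\mathcal F$ be a field and $\mathcal X,\mathcal U$ finite-dimensional vector spaces over $\mathcal F$. Let $A:\mathcal X\to\mathcal X$ and $B:\mathcal U\to\mathcal X$ be linear maps with $B$ injective, and consider the system $x_{t+1}=Ax_t+Bu_t$. Let $g:\mathcal X\to\mathbb R_{\ge 0}$ satisfy $g(x)=0\iff x=0$. Standing assumption: all minima appearing below are attained. Infinite-horizon problem $(A,B,g,\alpha)$, $\alpha\in(0,1)$: a policy $\pi$ assigns to each initial state $x_0$ an input sequence $\pi(x_0)=(\pi_t(x_0))_{t\in\mathbb Z_+}\in\mathcal U^{\mathbb Z_+}$; its cost is $J(x_0,\pi)=\sum_{t=0}^{\infty}\alpha^t g(x_t)$ with $x_{t+1}=Ax_t+B\pi_t(x_0)$. The optimal cost is $J^*(x_0)=\min_\pi J(x_0,\pi)$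 and a policy attaining it is optimal at $x_0$. A decomposition of $\mathcal X$ over $A$ is a direct sum $\mathcal X=\mathcal X_1\oplus\cdots\oplus\mathcal X_r$ with $r>1$ and $A\mathcal X_i\subseteq\mathcal X_i$ for all $i\in\mathcal I=\{1,\dots,r\}$. Write $\rho_i:\mathcal X\to\mathcal X_i$ for the projection onto $\mathcal X_i$ along the other summands. $\mathcal G_s$ is the set of functions $h:\mathcal X\to\mathbb R_{\ge0}$ with $h(x)=\sum_{i\in\mathcal I}h(\rho_i(x))$ for all $x$. Let $\mathcal E_i=\{u\in\mathcal U: Bu\in\mathcal X_i\}$. Subproblem $(A,B|_{\mathcal E_i},g,\alpha)$: the system $x_{i,t+1}=Ax_{i,t}+B\bar u_{i,t}$ with states in $\mathcal X_i$, inputs in $\mathcal E_i$, policies $\bar\pi_i(x_{i,0})\in\mathcal E_i^{\mathbb Z_+}$, cost $\bar J_i(x_{i,0},\bar\pi_i)=\sum_{t\ge0}\alpha^tg(x_{i,t})$, optimal cost $\bar J_i^*$ and optimal policies $\bar\pi_i^*$. Definition 1: the family $\{(A,B|_{\mathcal E_i},g,\alpha)\}_{i\in\mathcal I}$ is a decomposition of $(A,B,g,\alpha)$ if for every $x\in\mathcal X$: $J^*(x)=\sum_{i\in\mathcal I}\bar J_i^*(\rho_i(x))$, and for every choice of optimal policies $\bar\pi_i^*(\rho_i(x))$, $i\in\mathcal I$, there exists an optimal policy $\pi^*(x)$ of $(A,B,g,\alpha)$ with $\pi^*(x)=\sum_{i\in\mathcal I}\bar\pi_i^*(\rho_i(x))$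 (componentwise sum). *)

theory Defs
  imports Complex_Main "HOL-Library.Extended_Nonnegative_Real"
begin

fun traj :: "('x::ab_group_add \<Rightarrow> 'x) \<Rightarrow> ('u \<Rightarrow> 'x) \<Rightarrow> 'x \<Rightarrow> (nat \<Rightarrow> 'u) \<Rightarrow> nat \<Rightarrow> 'x" where
  "traj A B x0 u 0 = x0"
| "traj A B x0 u (Suc t) = A (traj A B x0 u t) + B (u t)"

definition cost :: "('x::ab_group_add \<Rightarrow> 'x) \<Rightarrow> ('u \<Rightarrow> 'x) \<Rightarrow> ('x \<Rightarrow> real) \<Rightarrow> real \<Rightarrow> 'x \<Rightarrow> (nat \<Rightarrow> 'u) \<Rightarrow> ennreal" where
  "cost A B g \<alpha> x0 u = (\<Sum>t. ennreal (\<alpha> ^ t * g (traj A B x0 u t)))"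

text \<open>Optimal cost over input sequences with values in the input set Uset
  (Uset = UNIV for the full problem, Uset = E_i for subproblem i).\<close>
definition optcost :: "('x::ab_group_add \<Rightarrow> 'x) \<Rightarrow> ('u \<Rightarrow> 'x) \<Rightarrow> 'u set \<Rightarrow> ('x \<Rightarrow> real) \<Rightarrow> real \<Rightarrow> 'x \<Rightarrow> ennreal" where
  "optcost A B Uset g \<alpha> x0 = (INF u \<in> {u. \<forall>t. u t \<in> Uset}. cost A B g \<alpha> x0 u)"

definition is_optimal :: "('x::ab_group_add \<Rightarrow> 'x) \<Rightarrow> ('u \<Rightarrow> 'x) \<Rightarrow> 'u set \<Rightarrow> ('x \<Rightarrow> real) \<Rightarrow> real \<Rightarrow> 'x \<Rightarrow> (nat \<Rightarrow> 'u) \<Rightarrow> bool" where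
  "is_optimal A B Uset g \<alpha> x0 u \<longleftrightarrow> (\<forall>t. u t \<in> Uset) \<and> cost A B g \<alpha> x0 u = optcost A B Uset g \<alpha> x0"

definition is_direct_sum :: "nat set \<Rightarrow> (nat \<Rightarrow> 'x::ab_group_add set) \<Rightarrow> bool" where
  "is_direct_sum I Xs \<longleftrightarrow>
     (\<forall>x. \<exists>y. (\<forall>i\<in>I. y i \<in> Xs i) \<and> x = (\<Sum>i\<in>I. y i)) \<and>
     (\<forall>y. (\<forall>i\<in>I. y i \<in> Xs i) \<and> (\<Sum>i\<in>I. y i) = 0 \<longrightarrow> (\<forall>i\<in>I. y i = 0))"

definition proj :: "nat set \<Rightarrow> (nat \<Rightarrow> 'x::ab_group_add set) \<Rightarrow> nat \<Rightarrow> 'x \<Rightarrow> 'x" where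
  "proj I Xs i x = (THE v. \<exists>y. (\<forall>j\<in>I. y j \<in> Xs j) \<and> x = (\<Sum>j\<in>I. y j) \<and> v = y i)"

definition Eset :: "('u \<Rightarrow> 'x) \<Rightarrow> 'x set \<Rightarrow> 'u set" where
  "Eset B Xi = {u. B u \<in> Xi}"

definition is_problem_decomposition ::
  "nat set \<Rightarrow> (nat \<Rightarrow> 'x::ab_group_add set) \<Rightarrow> ('x \<Rightarrow> 'x) \<Rightarrow> ('u::ab_group_add \<Rightarrow> 'x) \<Rightarrow> ('x \<Rightarrow> real) \<Rightarrow> real \<Rightarrow> bool" where
  "is_problem_decomposition I Xs A B g \<alpha> \<longleftrightarrow>
     (\<forall>x. optcost A B UNIV g \<alpha> x = (\<Sum>i\<in>I. optcost A B (Eset B (Xs i)) g \<alpha> (proj I Xs i x))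
        \<and> (\<forall>ubar. (\<forall>i\<in>I. is_optimal A B (Eset B (Xs i)) g \<alpha> (proj I Xs i x) (ubar i))
                 \<longrightarrow> is_optimal A B UNIV g \<alpha> x (\<lambda>t. \<Sum>i\<in>I. ubar i t)))"

end

theory Submission
  imports Defs
begin

lemma proj_unique:
  assumes uniq: "\<forall>y. (\<forall>i\<in>I. y i \<in> Xs i) \<and> (\<Sum>i\<in>I. y i) = 0 \<longrightarrow> (\<forall>i\<in>I. y i = 0)"
    and diff: "\<And>i a b. i \<in> I \<Longrightarrow> a \<in> Xs i \<Longrightarrow> b \<in> Xs i \<Longrightarrow> a - b \<in> Xs i"
    and y: "\<forall>j\<in>I. y j \<in> Xs j" and i: "i \<in> I"
  shows "proj I Xs i (\<Sum>j\<in>I. y j) = y i"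
  unfolding proj_def
proof (rule the_equality)
  show "\<exists>y'. (\<forall>j\<in>I. y' j \<in> Xs j) \<and> (\<Sum>j\<in>I. y j) = (\<Sum>j\<in>I. y' j) \<and> y i = y' i"
    using y by blast
next
  fix v assume "\<exists>y'. (\<forall>j\<in>I. y' j \<in> Xs j) \<and> (\<Sum>j\<in>I. y j) = (\<Sum>j\<in>I. y' j) \<and> v = y' i"
  then obtain y' where y': "\<forall>j\<in>I. y' j \<in> Xs j" "(\<Sum>j\<in>I. y j) = (\<Sum>j\<in>I. y' j)" "v = y' i" by blast
  have "\<forall>j\<in>I. y j - y' j \<in> Xs j" using y y' diff by blast
  moreover have "(\<Sum>j\<in>I. y j - y' j) = 0" using y'(2) by (simp add: sum_subtractf)
  ultimately have "\<forall>j\<in>I. y j - y' j = 0" using uniq[rule_format, of "\<lambda>j. y j - y' j"] by blast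
  thus "v = y i" using i y'(3) by auto
qed

lemma traj_sum:
  assumes addA: "\<And>a b. A (a + b) = A a + A b" and addB: "\<And>a b. B (a + b) = B a + B b"
    and A0: "A 0 = 0" and B0: "B 0 = 0"
  shows "traj A B (\<Sum>i\<in>I. x0 i) (\<lambda>t. \<Sum>i\<in>I. e i t) t = (\<Sum>i\<in>I. traj A B (x0 i) (e i) t)"
proof (induction t)
  case 0 then show ?case by simp
next
  case (Suc t)
  have sA: "A (\<Sum>i\<in>I. f i) = (\<Sum>i\<in>I. A (f i))" for f :: "_ \<Rightarrow> 'a"
    using sum_comp_morphism[of A f I] addA A0 by (simp add: o_def)
  have sB: "B (\<Sum>i\<in>I. f i) = (\<Sum>i\<in>I. B (f i))" for f :: "_ \<Rightarrow> 'b"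
    using sum_comp_morphism[of B f I] addB B0 by (simp add: o_def)
  show ?case using Suc by (simp add: sA sB sum.distrib)
qed

lemma traj_in:
  assumes "x0 \<in> S" "\<And>t. B (e t) \<in> S" "A ` S \<subseteq> S" "\<And>a b. a \<in> S \<Longrightarrow> b \<in> S \<Longrightarrow> a + b \<in> S"
  shows "traj A B x0 e t \<in> S"
  using assms by (induction t) auto


theorem lemma2:
  fixes sX :: "'f::field \<Rightarrow> 'x::ab_group_add \<Rightarrow> 'x"
    and sU :: "'f \<Rightarrow> 'u::ab_group_add \<Rightarrow> 'u"
    and A :: "'x \<Rightarrow> 'x" and B :: "'u \<Rightarrow> 'x"
    and g :: "'x \<Rightarrow> real" and \<alpha> :: real
    and r :: nat and Xs :: "nat \<Rightarrow> 'x set"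
  assumes fdX: "\<exists>bX. finite_dimensional_vector_space sX bX"
    and fdU: "\<exists>bU. finite_dimensional_vector_space sU bU"
    and linA: "Vector_Spaces.linear sX sX A"
    and linB: "Vector_Spaces.linear sU sX B"
    and injB: "inj B"
    and g_nonneg: "\<forall>x. g x \<ge> 0"
    and g_zero: "\<forall>x. g x = 0 \<longleftrightarrow> x = 0"
    and alpha: "0 < \<alpha>" "\<alpha> < 1"
    and r_gt: "r > 1"
    and subsp: "\<forall>i\<in>{1..r}. module.subspace sX (Xs i)"
    and inv: "\<forall>i\<in>{1..r}. A ` Xs i \<subseteq> Xs i"
    and dsum: "is_direct_sum {1..r} Xs"
    and g_sep: "\<forall>x. g x = (\<Sum>i\<in>{1..r}. g (proj {1..r} Xs i x))"
    and attained: "\<forall>x. \<exists>u. is_optimal A B UNIV g \<alpha> x u"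
    and attained_sub: "\<forall>i\<in>{1..r}. \<forall>x\<in>Xs i. \<exists>u. is_optimal A B (Eset B (Xs i)) g \<alpha> x u"
  shows "is_problem_decomposition {1..r} Xs A B g \<alpha> \<longleftrightarrow>
    (\<forall>x. \<exists>u. is_optimal A B UNIV g \<alpha> x u \<and>
        (\<forall>t. u t \<in> {v. \<exists>e. (\<forall>i\<in>{1..r}. e i \<in> Eset B (Xs i)) \<and> v = (\<Sum>i\<in>{1..r}. e i)}))"
proof -
  let ?I = "{1..r::nat}"
  have linA': "vector_space sX" "\<forall>a b. A (a + b) = A a + A b" using linA unfolding Vector_Spaces.linear_iff by auto
  have linB': "\<forall>a b. B (a + b) = B a + B b" using linB unfolding Vector_Spaces.linear_iff by auto
  have modX: "module sX" using linA'(1) by (simp add: vector_space_def module_def)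
  have A0: "A 0 = 0" using linA'(2) by (metis add_cancel_right_right)
  have B0: "B 0 = 0" using linB' by (metis add_cancel_right_right)
  have sdiff: "\<And>i a b. i \<in> ?I \<Longrightarrow> a \<in> Xs i \<Longrightarrow> b \<in> Xs i \<Longrightarrow> a - b \<in> Xs i"
    using module.subspace_diff[OF modX] subsp by blast
  have sadd: "\<And>i a b. i \<in> ?I \<Longrightarrow> a \<in> Xs i \<Longrightarrow> b \<in> Xs i \<Longrightarrow> a + b \<in> Xs i"
    using module.subspace_add[OF modX] subsp by blast
  have uniq: "\<forall>y. (\<forall>i\<in>?I. y i \<in> Xs i) \<and> (\<Sum>i\<in>?I. y i) = 0 \<longrightarrow> (\<forall>i\<in>?I. y i = 0)"
    using dsum by (simp add: is_direct_sum_def)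
  have PU: "proj ?I Xs i (\<Sum>j\<in>?I. y j) = y i" if "\<forall>j\<in>?I. y j \<in> Xs j" "i \<in> ?I" for y i
    using proj_unique[OF uniq sdiff that] by blast
  have dec: "x = (\<Sum>i\<in>?I. proj ?I Xs i x) \<and> (\<forall>i\<in>?I. proj ?I Xs i x \<in> Xs i)" for x
  proof -
    obtain y where y: "\<forall>i\<in>?I. y i \<in> Xs i" "x = (\<Sum>i\<in>?I. y i)" using dsum unfolding is_direct_sum_def by blast
    have "\<forall>i\<in>?I. proj ?I Xs i x = y i" using PU[OF y(1)] y(2) by simp
    thus ?thesis using y by simp
  qed
  have split: "cost A B g \<alpha> (\<Sum>i\<in>?I. x0 i) (\<lambda>t. \<Sum>i\<in>?I. e i t)
      = (\<Sum>i\<in>?I. cost A B g \<alpha> (x0 i) (e i))"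
    if x0: "\<forall>i\<in>?I. x0 i \<in> Xs i" and e: "\<forall>i\<in>?I. \<forall>t. e i t \<in> Eset B (Xs i)" for x0 e
  proof -
    have tin: "traj A B (x0 i) (e i) t \<in> Xs i" if "i \<in> ?I" for i t
      apply (rule traj_in)
      using x0 e inv sadd that by (auto simp: Eset_def)
    have tr: "traj A B (\<Sum>i\<in>?I. x0 i) (\<lambda>t. \<Sum>i\<in>?I. e i t) t = (\<Sum>i\<in>?I. traj A B (x0 i) (e i) t)" for t
      using traj_sum[of A B, OF _ _ A0 B0] linA'(2) linB' by blast
    have gt: "g (traj A B (\<Sum>i\<in>?I. x0 i) (\<lambda>t. \<Sum>i\<in>?I. e i t) t) = (\<Sum>i\<in>?I. g (traj A B (x0 i) (e i) t))" for t
    proof -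
      have "g (traj A B (\<Sum>i\<in>?I. x0 i) (\<lambda>t. \<Sum>i\<in>?I. e i t) t)
          = (\<Sum>i\<in>?I. g (proj ?I Xs i (\<Sum>j\<in>?I. traj A B (x0 j) (e j) t)))"
        using g_sep tr by metis
      also have "\<dots> = (\<Sum>i\<in>?I. g (traj A B (x0 i) (e i) t))"
        proof (rule sum.cong[OF refl])
        fix i assume i: "i \<in> ?I"
        have "\<forall>j\<in>?I. traj A B (x0 j) (e j) t \<in> Xs j" using tin by blast
        then show "g (proj ?I Xs i (\<Sum>j\<in>?I. traj A B (x0 j) (e j) t)) = g (traj A B (x0 i) (e i) t)"
          using PU[of "\<lambda>j. traj A B (x0 j) (e j) t" i] i by simp
      qed
      finally show ?thesis .
    qed
    have "cost A B g \<alpha> (\<Sum>i\<in>?I. x0 i) (\<lambda>t. \<Sum>i\<in>?I. e i t)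
       = (\<Sum>t. \<Sum>i\<in>?I. ennreal (\<alpha> ^ t * g (traj A B (x0 i) (e i) t)))"
      unfolding cost_def gt
      by (subst sum_ennreal) (auto simp: sum_distrib_left g_nonneg alpha less_imp_le)
    also have "\<dots> = (\<Sum>i\<in>?I. cost A B g \<alpha> (x0 i) (e i))"
      unfolding cost_def by (rule suminf_sum) simp
    finally show ?thesis .
  qed
  have le_opt: "optcost A B S g \<alpha> x \<le> cost A B g \<alpha> x u" if "\<forall>t. u t \<in> S" for S x u
    unfolding optcost_def by (rule INF_lower) (use that in simp)
  show ?thesis
  proof
    assume D: "is_problem_decomposition ?I Xs A B g \<alpha>"
    show "\<forall>x. \<exists>u. is_optimal A B UNIV g \<alpha> x u \<and>
        (\<forall>t. u t \<in> {v. \<exists>e. (\<forall>i\<in>?I. e i \<in> Eset B (Xs i)) \<and> v = (\<Sum>i\<in>?I. e i)})"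
    proof
      fix x
      have "\<forall>i\<in>?I. \<exists>u. is_optimal A B (Eset B (Xs i)) g \<alpha> (proj ?I Xs i x) u"
        using attained_sub dec by blast
      then obtain ub where ub: "\<forall>i\<in>?I. is_optimal A B (Eset B (Xs i)) g \<alpha> (proj ?I Xs i x) (ub i)"
        by metis
      hence "is_optimal A B UNIV g \<alpha> x (\<lambda>t. \<Sum>i\<in>?I. ub i t)"
        using D unfolding is_problem_decomposition_def by blast
      moreover have "\<forall>t. (\<Sum>i\<in>?I. ub i t) \<in> {v. \<exists>e. (\<forall>i\<in>?I. e i \<in> Eset B (Xs i)) \<and> v = (\<Sum>i\<in>?I. e i)}"
      proof
        fix t
        show "(\<Sum>i\<in>?I. ub i t) \<in> {v. \<exists>e. (\<forall>i\<in>?I. e i \<in> Eset B (Xs i)) \<and> v = (\<Sum>i\<in>?I. e i)}"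
          using ub unfolding is_optimal_def by (intro CollectI exI[of _ "\<lambda>i. ub i t"]) auto
      qed
      ultimately show "\<exists>u. is_optimal A B UNIV g \<alpha> x u \<and>
        (\<forall>t. u t \<in> {v. \<exists>e. (\<forall>i\<in>?I. e i \<in> Eset B (Xs i)) \<and> v = (\<Sum>i\<in>?I. e i)})" by blast
    qed
  next
    assume H: "\<forall>x. \<exists>u. is_optimal A B UNIV g \<alpha> x u \<and>
        (\<forall>t. u t \<in> {v. \<exists>e. (\<forall>i\<in>?I. e i \<in> Eset B (Xs i)) \<and> v = (\<Sum>i\<in>?I. e i)})"
    show "is_problem_decomposition ?I Xs A B g \<alpha>"
      unfolding is_problem_decomposition_def
    proof (intro allI conjI impI)
      fix x
      let ?S = "\<Sum>i\<in>?I. optcost A B (Eset B (Xs i)) g \<alpha> (proj ?I Xs i x)"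
      have xd: "x = (\<Sum>i\<in>?I. proj ?I Xs i x)" and xin: "\<forall>i\<in>?I. proj ?I Xs i x \<in> Xs i" using dec by auto
      obtain u where u: "is_optimal A B UNIV g \<alpha> x u"
        "\<forall>t. \<exists>e. (\<forall>i\<in>?I. e i \<in> Eset B (Xs i)) \<and> u t = (\<Sum>i\<in>?I. e i)" using H[rule_format, of x] by blast
      then obtain E where E: "\<forall>t. (\<forall>i\<in>?I. E t i \<in> Eset B (Xs i)) \<and> u t = (\<Sum>i\<in>?I. E t i)" by metis
      have ueq: "u = (\<lambda>t. \<Sum>i\<in>?I. E t i)" using E by auto
      have "optcost A B UNIV g \<alpha> x = cost A B g \<alpha> x u" using u(1) by (simp add: is_optimal_def)
      also have "\<dots> = (\<Sum>i\<in>?I. cost A B g \<alpha> (proj ?I Xs i x) (\<lambda>t. E t i))"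
        using split[of "\<lambda>i. proj ?I Xs i x" "\<lambda>i t. E t i"] xin E ueq xd by simp
      also have "\<dots> \<ge> ?S"
        by (rule sum_mono, rule le_opt) (use E in auto)
      finally have ge: "?S \<le> optcost A B UNIV g \<alpha> x" .
      have le: "cost A B g \<alpha> x (\<lambda>t. \<Sum>i\<in>?I. ub i t) = ?S"
        if ub: "\<forall>i\<in>?I. is_optimal A B (Eset B (Xs i)) g \<alpha> (proj ?I Xs i x) (ub i)" for ub
      proof -
        have "cost A B g \<alpha> x (\<lambda>t. \<Sum>i\<in>?I. ub i t) = (\<Sum>i\<in>?I. cost A B g \<alpha> (proj ?I Xs i x) (ub i))"
          using split[of "\<lambda>i. proj ?I Xs i x" ub] xin ub xd by (simp add: is_optimal_def)
        also have "\<dots> = ?S" using ub by (simp add: is_optimal_def)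
        finally show ?thesis .
      qed
      have "\<forall>i\<in>?I. \<exists>u. is_optimal A B (Eset B (Xs i)) g \<alpha> (proj ?I Xs i x) u"
        using attained_sub xin by blast
      then obtain ub where ub: "\<forall>i\<in>?I. is_optimal A B (Eset B (Xs i)) g \<alpha> (proj ?I Xs i x) (ub i)"
        by metis
      have "optcost A B UNIV g \<alpha> x \<le> ?S" using le_opt[of "\<lambda>t. \<Sum>i\<in>?I. ub i t" UNIV x] le[OF ub] by simp
      with ge show eq: "optcost A B UNIV g \<alpha> x = ?S" by simp
      fix ubar
      assume "\<forall>i\<in>?I. is_optimal A B (Eset B (Xs i)) g \<alpha> (proj ?I Xs i x) (ubar i)"
      then show "is_optimal A B UNIV g \<alpha> x (\<lambda>t. \<Sum>i\<in>?I. ubar i t)"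
        using le eq by (simp add: is_optimal_def)
    qed
  qed
qed

end
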